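(* Let $\mathcal{S}$ be a semifilter. Then $\mathbb{Q}\times\mathcal{S}$ is homeomorphic to a semifilter.
   Context: $\mathbb{Q}$ denotes the space of rationals. A semifilter (on $\omega$) is a collection $\mathcal{S}\subseteq\mathcal{P}(\omega)$ such that $\varnothing\notin\mathcal{S}$, $\omega\in\mathcal{S}$, $\mathcal{S}$ is closed under finite modifications (if $x\in\mathcal{S}$ and $y\subseteq\omega$ with $(x\setminus y)\cup(y\setminus x)$ finite then $y\in\mathcal{S}$), and $\mathcal{S}$ is upward-closed. Subsets of $\mathcal{P}(\omega)$ are identified via characteristic functions with subspaces of $2^\omega$. *)

theory Defs
  imports "HOL-Analysis.Analysis"
begin

definition semifilter :: "nat set set \<Rightarrow> bool" where
  "semifilter S \<longleftrightarrow>
     {} \<notin> S \<and> UNIV \<in> S \<and>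
     (\<forall>x y. x \<in> S \<and> finite ((x - y) \<union> (y - x)) \<longrightarrow> y \<in> S) \<and>
     (\<forall>x y. x \<in> S \<and> x \<subseteq> y \<longrightarrow> y \<in> S)"

definition char_fun :: "nat set \<Rightarrow> (nat \<Rightarrow> bool)" where
  "char_fun x = (\<lambda>n. n \<in> x)"

definition cantor_space :: "(nat \<Rightarrow> bool) topology" where
  "cantor_space = product_topology (\<lambda>_. discrete_topology (UNIV :: bool set)) UNIV"

end

theory Submission
  imports Defs
begin

definition slo :: "'a set \<Rightarrow> ('a \<Rightarrow> 'a \<Rightarrow> bool) \<Rightarrow> bool" where
  "slo A l \<longleftrightarrow> (\<forall>x\<in>A. \<not> l x x) \<and> (\<forall>x\<in>A. \<forall>y\<in>A. \<forall>z\<in>A. l x y \<longrightarrow> l y z \<longrightarrow> l x z)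
     \<and> (\<forall>x\<in>A. \<forall>y\<in>A. x \<noteq> y \<longrightarrow> l x y \<or> l y x)"

definition dns :: "'a set \<Rightarrow> ('a \<Rightarrow> 'a \<Rightarrow> bool) \<Rightarrow> bool" where
  "dns A l \<longleftrightarrow> (\<forall>x\<in>A. \<forall>y\<in>A. l x y \<longrightarrow> (\<exists>z\<in>A. l x z \<and> l z y))"

definition noend :: "'a set \<Rightarrow> ('a \<Rightarrow> 'a \<Rightarrow> bool) \<Rightarrow> bool" where
  "noend A l \<longleftrightarrow> (\<forall>x\<in>A. (\<exists>y\<in>A. l y x) \<and> (\<exists>y\<in>A. l x y))"

definition piso :: "('a \<Rightarrow> 'a \<Rightarrow> bool) \<Rightarrow> ('b \<Rightarrow> 'b \<Rightarrow> bool) \<Rightarrow> ('a \<times> 'b) set \<Rightarrow> bool" where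
  "piso la lb P \<longleftrightarrow> (\<forall>a b a' b'. (a,b) \<in> P \<longrightarrow> (a',b') \<in> P \<longrightarrow> (la a a' \<longleftrightarrow> lb b b'))"

lemma slo_irr: assumes "slo A l" "x \<in> A" shows "\<not> l x x"
  using bspec[OF conjunct1[OF assms(1)[unfolded slo_def]] assms(2)] .

lemma slo_trans:
  assumes "slo A l" "x \<in> A" "y \<in> A" "z \<in> A" "l x y" "l y z" shows "l x z"
proof -
  have "\<forall>x\<in>A. \<forall>y\<in>A. \<forall>z\<in>A. l x y \<longrightarrow> l y z \<longrightarrow> l x z"
    using conjunct1[OF conjunct2[OF assms(1)[unfolded slo_def]]] .
  from bspec[OF bspec[OF bspec[OF this assms(2)] assms(3)] assms(4)] 
  show ?thesis using mp[OF mp[OF _ assms(5)] assms(6)] by blast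
qed

lemma slo_tot:
  assumes "slo A l" "x \<in> A" "y \<in> A" "x \<noteq> y" shows "l x y \<or> l y x"
proof -
  have "\<forall>x\<in>A. \<forall>y\<in>A. x \<noteq> y \<longrightarrow> l x y \<or> l y x"
    using conjunct2[OF conjunct2[OF assms(1)[unfolded slo_def]]] .
  from bspec[OF bspec[OF this assms(2)] assms(3)] show ?thesis using mp[OF _ assms(4)] by blast
qed

lemma slo_asym:
  assumes "slo A l" "x \<in> A" "y \<in> A" "l x y" shows "\<not> l y x"
proof
  assume "l y x"
  from slo_trans[OF assms(1) assms(2) assms(3) assms(2) assms(4) this] slo_irr[OF assms(1) assms(2)]
  show False by simp
qed

lemma slo_flip: assumes "slo A l" shows "slo A (\<lambda>x y. l y x)"
proof -
  have "\<forall>x\<in>A. \<not> l x x" using slo_irr[OF assms] by simp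
  moreover have "\<forall>x\<in>A. \<forall>y\<in>A. \<forall>z\<in>A. l y x \<longrightarrow> l z y \<longrightarrow> l z x"
  proof (intro ballI impI)
    fix x y z assume "x \<in> A" "y \<in> A" "z \<in> A" "l y x" "l z y"
    from slo_trans[OF assms \<open>z \<in> A\<close> \<open>y \<in> A\<close> \<open>x \<in> A\<close> \<open>l z y\<close> \<open>l y x\<close>]
    show "l z x" .
  qed
  moreover have "\<forall>x\<in>A. \<forall>y\<in>A. x \<noteq> y \<longrightarrow> l y x \<or> l x y"
  proof (intro ballI impI)
    fix x y assume "x \<in> A" "y \<in> A" "x \<noteq> y"
    from slo_tot[OF assms \<open>x \<in> A\<close> \<open>y \<in> A\<close> \<open>x \<noteq> y\<close>]
    show "l y x \<or> l x y" by iprover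
  qed
  ultimately show ?thesis unfolding slo_def by (rule conjI[OF _ conjI])
qed

lemma slo_below_all:
  assumes "slo B l" "X \<subseteq> B" "u \<in> B" "b \<in> B" "\<forall>y\<in>X. y = u \<or> l u y" "l b u"
  shows "\<forall>y\<in>X. l b y"
proof
  fix y assume y: "y \<in> X"
  show "l b y"
  proof (cases "y = u")
    case True then show ?thesis using assms(6) by simp
  next
    case False
    then have "l u y" using assms(5) y by auto
    moreover have "y \<in> B" using y assms(2) by auto
    ultimately show ?thesis using slo_trans[OF assms(1) assms(4) assms(3), of y] assms(6) by simp
  qed
qed

lemma slo_above_all:
  assumes "slo B l" "X \<subseteq> B" "u \<in> B" "b \<in> B" "\<forall>y\<in>X. y = u \<or> l y u" "l u b"
  shows "\<forall>y\<in>X. l y b"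
  using slo_below_all[OF slo_flip[OF assms(1)] assms(2-4)] assms(5,6) by blast

lemma slo_max:
  assumes "slo A l" "finite X" "X \<noteq> {}" "X \<subseteq> A"
  shows "\<exists>m\<in>X. \<forall>x\<in>X. x = m \<or> l x m"
  using assms(2,3,4)
proof (induction X rule: finite_ne_induct)
  case (singleton x)
  then show ?case by auto
next
  case (insert y X)
  then obtain m where m: "m \<in> X" "\<forall>x\<in>X. x = m \<or> l x m" by auto
  have yA: "y \<in> A" and XA: "X \<subseteq> A" using insert.prems by auto
  have ym: "y \<noteq> m" using m insert.hyps by auto
  show ?case
  proof (cases "l m y")
    case True
    have "\<forall>x\<in>insert y X. x = y \<or> l x y"
    proof
      fix x assume "x \<in> insert y X"
      then show "x = y \<or> l x y"
      proof
        assume "x \<in> X"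
        then have "x = m \<or> l x m" using m by auto
        then show ?thesis
        proof
          assume "l x m"
          then show ?thesis using True slo_trans[OF assms(1), of x m y] XA \<open>x \<in> X\<close> m(1) yA by blast
        qed (use True in simp)
      qed simp
    qed
    then show ?thesis by blast
  next
    case False
    then have "l y m" using slo_tot[OF assms(1) yA, of m] XA m(1) ym by blast
    then show ?thesis using m by auto
  qed
qed

lemma between:
  assumes s: "slo B l" and d: "dns B l" and e: "noend B l" and n: "B \<noteq> {}"
    and fL: "finite L" and fU: "finite U" and LB: "L \<subseteq> B" and UB: "U \<subseteq> B"
    and LU: "\<forall>x\<in>L. \<forall>y\<in>U. l x y"
  shows "\<exists>b\<in>B. (\<forall>x\<in>L. l x b) \<and> (\<forall>y\<in>U. l b y)"
proof (cases "L = {}")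
  case True
  show ?thesis
  proof (cases "U = {}")
    case True
    then show ?thesis using \<open>L = {}\<close> n by auto
  next
    case False
    obtain u where u: "u \<in> U" "\<forall>y\<in>U. y = u \<or> l u y"
      using slo_max[OF slo_flip[OF s] fU False UB] by auto
    obtain b where b: "b \<in> B" "l b u" using e u UB unfolding noend_def by blast
    have "\<forall>y\<in>U. l b y" using slo_below_all[OF s UB _ b(1) u(2) b(2)] u(1) UB by blast
    then show ?thesis using b \<open>L = {}\<close> by auto
  qed
next
  case False
  obtain m where m: "m \<in> L" "\<forall>x\<in>L. x = m \<or> l x m"
    using slo_max[OF s fL False LB] by auto
  show ?thesis
  proof (cases "U = {}")
    case True
    obtain b where b: "b \<in> B" "l m b" using e m LB unfolding noend_def by blast
    have "\<forall>y\<in>L. l y b" using slo_above_all[OF s LB _ b(1) m(2) b(2)] m(1) LB by blast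
    then show ?thesis using b True by auto
  next
    case False
    obtain u where u: "u \<in> U" "\<forall>y\<in>U. y = u \<or> l u y"
      using slo_max[OF slo_flip[OF s] fU False UB] by auto
    have "l m u" using LU m u by auto
    then obtain b where b: "b \<in> B" "l m b" "l b u" using d m u LB UB unfolding dns_def by blast
    have "\<forall>y\<in>L. l y b" using slo_above_all[OF s LB _ b(1) m(2) b(2)] m(1) LB by blast
    moreover have "\<forall>y\<in>U. l b y" using slo_below_all[OF s UB _ b(1) u(2) b(3)] u(1) UB by blast
    ultimately show ?thesis using b by auto
  qed
qed

lemma extend:
  assumes sA: "slo A la" and sB: "slo B lb" and d: "dns B lb" and e: "noend B lb" and n: "B \<noteq> {}"
    and fP: "finite P" and PAB: "P \<subseteq> A \<times> B" and pP: "piso la lb P" and a: "a \<in> A"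
  shows "\<exists>b\<in>B. piso la lb (insert (a,b) P)"
proof (cases "\<exists>b. (a,b) \<in> P")
  case True
  then obtain b where "(a,b) \<in> P" by auto
  then have "insert (a,b) P = P" "b \<in> B" using PAB by auto
  then show ?thesis using pP by metis
next
  case False
  define L where "L = {b. \<exists>a'. (a',b) \<in> P \<and> la a' a}"
  define U where "U = {b. \<exists>a'. (a',b) \<in> P \<and> la a a'}"
  have "L \<subseteq> snd ` P" "U \<subseteq> snd ` P" unfolding L_def U_def by force+
  then have fL: "finite L" and fU: "finite U" using fP finite_subset by blast+
  have LB: "L \<subseteq> B" and UB: "U \<subseteq> B" using PAB unfolding L_def U_def by auto
  have LU: "\<forall>x\<in>L. \<forall>y\<in>U. lb x y"
  proof (intro ballI)
    fix x y assume "x \<in> L" "y \<in> U"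
    then obtain a1 a2 where "(a1,x) \<in> P" "la a1 a" "(a2,y) \<in> P" "la a a2"
      unfolding L_def U_def by auto
    moreover then have "a1 \<in> A" "a2 \<in> A" using PAB by auto
    ultimately have "la a1 a2" using slo_trans[OF sA] a by blast
    then show "lb x y" using pP \<open>(a1,x) \<in> P\<close> \<open>(a2,y) \<in> P\<close> unfolding piso_def by blast
  qed
  obtain b where b: "b \<in> B" "\<forall>x\<in>L. lb x b" "\<forall>y\<in>U. lb b y"
    using between[OF sB d e n fL fU LB UB LU] by auto
  have key: "(la a a' \<longleftrightarrow> lb b b') \<and> (la a' a \<longleftrightarrow> lb b' b)" if ab: "(a',b') \<in> P" for a' b'
  proof -
    have "a' \<noteq> a" using False ab by auto
    have a'A: "a' \<in> A" and b'B: "b' \<in> B" using ab PAB by auto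
    have "la a a' \<or> la a' a" using slo_tot[OF sA a a'A] \<open>a' \<noteq> a\<close> by blast
    then show ?thesis
    proof
      assume h: "la a a'"
      then have "b' \<in> U" using ab unfolding U_def by auto
      then have "lb b b'" using b by auto
      then show ?thesis using h slo_asym[OF sA a a'A] slo_asym[OF sB b(1) b'B] by blast
    next
      assume h: "la a' a"
      then have "b' \<in> L" using ab unfolding L_def by auto
      then have "lb b' b" using b by auto
      then show ?thesis using h slo_asym[OF sA a'A a] slo_asym[OF sB b'B b(1)] by blast
    qed
  qed
  have "\<not> la a a" "\<not> lb b b" using slo_irr[OF sA a] slo_irr[OF sB b(1)] by auto
  then have "piso la lb (insert (a,b) P)"
    using pP key unfolding piso_def by auto
  then show ?thesis using b by auto
qed

lemma piso_conv: "piso lb la (P\<inverse>) \<longleftrightarrow> piso la lb P"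
  unfolding piso_def by auto

lemma extend_b:
  assumes sA: "slo A la" and sB: "slo B lb" and d: "dns A la" and e: "noend A la" and n: "A \<noteq> {}"
    and fP: "finite P" and PAB: "P \<subseteq> A \<times> B" and pP: "piso la lb P" and b: "b \<in> B"
  shows "\<exists>a\<in>A. piso la lb (insert (a,b) P)"
proof -
  have "P\<inverse> \<subseteq> B \<times> A" using PAB by auto
  moreover have "finite (P\<inverse>)" using fP by simp
  ultimately obtain a where a: "a \<in> A" "piso lb la (insert (b,a) (P\<inverse>))"
    using extend[OF sB sA d e n \<open>finite (P\<inverse>)\<close> \<open>P\<inverse> \<subseteq> B \<times> A\<close> piso_conv[THEN iffD2, OF pP] b] by blast
  have "insert (b,a) (P\<inverse>) = (insert (a,b) P)\<inverse>" by auto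
  then show ?thesis using a piso_conv by metis
qed

lemma back_and_forth:
  assumes sA: "slo A la" and sB: "slo B lb" and dA: "dns A la" and dB: "dns B lb"
    and eA: "noend A la" and eB: "noend B lb" and cA: "countable A" and cB: "countable B"
    and nA: "A \<noteq> {}" and nB: "B \<noteq> {}"
  shows "\<exists>f. bij_betw f A B \<and> (\<forall>x\<in>A. \<forall>y\<in>A. la x y \<longrightarrow> lb (f x) (f y))"
proof -
  define ea where "ea = from_nat_into A"
  define eb where "eb = from_nat_into B"
  have rA: "range ea = A" using range_from_nat_into[OF nA cA] ea_def by simp
  have rB: "range eb = B" using range_from_nat_into[OF nB cB] eb_def by simp
  define good where "good P \<longleftrightarrow> finite P \<and> P \<subseteq> A \<times> B \<and> piso la lb P" for P
  define sa where "sa P n = insert (ea n, SOME b. b \<in> B \<and> piso la lb (insert (ea n, b) P)) P" for P n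
  define sb where "sb P n = insert (SOME a. a \<in> A \<and> piso la lb (insert (a, eb n) P), eb n) P" for P n
  have ga: "good (sa P n)" if g: "good P" for P n
  proof -
    have eaA: "ea n \<in> A" using rA by auto
    have "\<exists>b. b \<in> B \<and> piso la lb (insert (ea n, b) P)"
      using extend[OF sA sB dB eB nB, of P "ea n"] g eaA unfolding good_def by auto
    then have "(SOME b. b \<in> B \<and> piso la lb (insert (ea n, b) P)) \<in> B \<and>
       piso la lb (insert (ea n, SOME b. b \<in> B \<and> piso la lb (insert (ea n, b) P)) P)"
      by (rule someI_ex)
    then show ?thesis using g eaA unfolding good_def sa_def by auto
  qed
  have gb: "good (sb P n)" if g: "good P" for P n
  proof -
    have ebB: "eb n \<in> B" using rB by auto
    have "\<exists>a. a \<in> A \<and> piso la lb (insert (a, eb n) P)"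
      using extend_b[OF sA sB dA eA nA, of P "eb n"] g ebB unfolding good_def by auto
    then have "(SOME a. a \<in> A \<and> piso la lb (insert (a, eb n) P)) \<in> A \<and>
       piso la lb (insert (SOME a. a \<in> A \<and> piso la lb (insert (a, eb n) P), eb n) P)"
      by (rule someI_ex)
    then show ?thesis using g ebB unfolding good_def sb_def by auto
  qed
  define seq where "seq = rec_nat {} (\<lambda>n P. sb (sa P n) n)"
  have seq0: "seq 0 = {}" and seqS: "seq (Suc n) = sb (sa (seq n) n) n" for n
    by (simp_all add: seq_def)
  have gs: "good (seq n)" for n
  proof (induction n)
    case 0 then show ?case by (simp add: seq0 good_def piso_def)
  next
    case (Suc n) then show ?case by (simp add: seqS ga gb)
  qed
  have mono: "seq n \<subseteq> seq (Suc n)" for n by (auto simp: seqS sa_def sb_def)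
  have monole: "m \<le> n \<Longrightarrow> seq m \<subseteq> seq n" for m n
    using lift_Suc_mono_le[of seq, OF mono] by blast
  define R where "R = (\<Union>n. seq n)"
  have sAB: "seq n \<subseteq> A \<times> B" for n using gs[of n] unfolding good_def by (elim conjE)
  have RAB: "R \<subseteq> A \<times> B" unfolding R_def using sAB by (rule UN_least)
  have pR: "piso la lb R"
    unfolding piso_def
  proof (intro allI impI)
    fix a b a' b' assume "(a,b) \<in> R" "(a',b') \<in> R"
    then obtain m m' where m: "(a,b) \<in> seq m" "(a',b') \<in> seq m'" unfolding R_def by blast
    have "(a,b) \<in> seq (max m m')" using monole[of m "max m m'"] m(1) by auto
    moreover have "(a',b') \<in> seq (max m m')" using monole[of m' "max m m'"] m(2) by auto
    moreover have "piso la lb (seq (max m m'))" using gs[of "max m m'"] unfolding good_def by (elim conjE)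
    ultimately show "la a a' = lb b b'" unfolding piso_def by blast
  qed
  have domA: "\<exists>b. (a,b) \<in> R" if "a \<in> A" for a
  proof -
    from that rA obtain n where an: "a = ea n" by blast
    have "(ea n, SOME b. b \<in> B \<and> piso la lb (insert (ea n, b) (seq n))) \<in> sa (seq n) n"
      unfolding sa_def by (rule insertI1)
    moreover have "sa (seq n) n \<subseteq> seq (Suc n)" unfolding seqS sb_def by (rule subset_insertI)
    ultimately show ?thesis unfolding R_def an by blast
  qed
  have domB: "\<exists>a. (a,b) \<in> R" if "b \<in> B" for b
  proof -
    from that rB obtain n where bn: "b = eb n" by blast
    have "(SOME a. a \<in> A \<and> piso la lb (insert (a, eb n) (sa (seq n) n)), eb n) \<in> seq (Suc n)"
      unfolding seqS sb_def by (rule insertI1)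
    then show ?thesis unfolding R_def bn by blast
  qed
  have func: "b = b'" if "(a,b) \<in> R" "(a,b') \<in> R" for a b b'
  proof -
    have "a \<in> A" "b \<in> B" "b' \<in> B" using that RAB by auto
    moreover have "la a a \<longleftrightarrow> lb b b'" "la a a \<longleftrightarrow> lb b' b"
      using pR[unfolded piso_def, rule_format, OF that(1) that(2)] pR[unfolded piso_def, rule_format, OF that(2) that(1)] by simp_all
    moreover have "\<not> la a a" using slo_irr[OF sA \<open>a \<in> A\<close>] .
    ultimately have "\<not> lb b b'" "\<not> lb b' b" by simp_all
    then show ?thesis using slo_tot[OF sB \<open>b \<in> B\<close> \<open>b' \<in> B\<close>] by (cases "b = b'") simp_all
  qed
  have funcinv: "a = a'" if "(a,b) \<in> R" "(a',b) \<in> R" for a a' b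
  proof -
    have "b \<in> B" "a \<in> A" "a' \<in> A" using that RAB by auto
    moreover have "la a a' \<longleftrightarrow> lb b b" "la a' a \<longleftrightarrow> lb b b"
      using pR[unfolded piso_def, rule_format, OF that(1) that(2)] pR[unfolded piso_def, rule_format, OF that(2) that(1)] by simp_all
    moreover have "\<not> lb b b" using slo_irr[OF sB \<open>b \<in> B\<close>] .
    ultimately have "\<not> la a a'" "\<not> la a' a" by simp_all
    then show ?thesis using slo_tot[OF sA \<open>a \<in> A\<close> \<open>a' \<in> A\<close>] by (cases "a = a'") simp_all
  qed
  define f where "f a = (SOME b. (a,b) \<in> R)" for a
  have fR: "(a, f a) \<in> R" if "a \<in> A" for a
    unfolding f_def using domA[OF that] by (rule someI_ex)
  have "bij_betw f A B"
    unfolding bij_betw_def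
  proof
    show "inj_on f A" unfolding inj_on_def using fR funcinv by metis
    show "f ` A = B"
    proof
      show "f ` A \<subseteq> B" using fR RAB by blast
      show "B \<subseteq> f ` A"
      proof
        fix b assume "b \<in> B"
        then obtain a where ab: "(a,b) \<in> R" using domB by auto
        then have "a \<in> A" using RAB by auto
        then have "f a = b" using func fR ab by blast
        then show "b \<in> f ` A" using \<open>a \<in> A\<close> by auto
      qed
    qed
  qed
  moreover have "\<forall>x\<in>A. \<forall>y\<in>A. la x y \<longrightarrow> lb (f x) (f y)"
    using fR pR[unfolded piso_def, rule_format] by blast
  ultimately show ?thesis by blast
qed


section \<open>Lexicographic order and the countable set DD\<close>

definition lexl :: "(nat \<Rightarrow> bool) \<Rightarrow> (nat \<Rightarrow> bool) \<Rightarrow> bool" where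
  "lexl p q \<longleftrightarrow> (\<exists>n. (\<forall>i<n. p i = q i) \<and> \<not> p n \<and> q n)"

definition DD :: "(nat \<Rightarrow> bool) set" where
  "DD = {p. finite {n. p n \<noteq> even n}}"

lemma lexl_irr: "\<not> lexl p p"
  unfolding lexl_def by simp

lemma lexl_trans:
  assumes "lexl p q" "lexl q r" shows "lexl p r"
proof -
  obtain n1 where n1: "\<forall>i<n1. p i = q i" "\<not> p n1" "q n1" using assms(1) unfolding lexl_def by blast
  obtain n2 where n2: "\<forall>i<n2. q i = r i" "\<not> q n2" "r n2" using assms(2) unfolding lexl_def by blast
  have "n1 \<noteq> n2" using n1(3) n2(2) by auto
  then show ?thesis
  proof (cases "n1 < n2")
    case True
    then have "\<forall>i<n1. p i = r i" "r n1" using n1 n2 by auto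
    then show ?thesis using n1(2) unfolding lexl_def by blast
  next
    case False
    then have "n2 < n1" using \<open>n1 \<noteq> n2\<close> by simp
    then have "\<forall>i<n2. p i = r i" "\<not> p n2" using n1 n2 by auto
    then show ?thesis using n2(3) unfolding lexl_def by blast
  qed
qed

lemma lexl_total:
  assumes "p \<noteq> q" shows "lexl p q \<or> lexl q p"
proof -
  have ex: "\<exists>k. p k \<noteq> q k"
  proof (rule ccontr)
    assume "\<not> (\<exists>k. p k \<noteq> q k)"
    then have "\<forall>k. p k = q k" by simp
    then have "p = q" by (simp add: fun_eq_iff)
    then show False using assms by simp
  qed
  define n where "n = (LEAST k. p k \<noteq> q k)"
  have pn: "p n \<noteq> q n" unfolding n_def using ex by (rule LeastI_ex)
  have below: "\<forall>i<n. p i = q i" unfolding n_def using not_less_Least by blast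
  show ?thesis
  proof (cases "p n")
    case True
    then have "\<not> q n" using pn by simp
    then have "lexl q p" unfolding lexl_def using below True by (intro exI[of _ n]) simp
    then show ?thesis by simp
  next
    case False
    then have "q n" using pn by simp
    then have "lexl p q" unfolding lexl_def using below False by (intro exI[of _ n]) simp
    then show ?thesis by simp
  qed
qed

lemma slo_lex: "slo A lexl"
proof -
  have 1: "\<forall>x\<in>A. \<not> lexl x x" by (simp add: lexl_irr)
  have 2: "\<forall>x\<in>A. \<forall>y\<in>A. \<forall>z\<in>A. lexl x y \<longrightarrow> lexl y z \<longrightarrow> lexl x z"
    using lexl_trans by blast
  have 3: "\<forall>x\<in>A. \<forall>y\<in>A. x \<noteq> y \<longrightarrow> lexl x y \<or> lexl y x"
    by (intro ballI impI) (rule lexl_total)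
  from 1 2 3 show ?thesis unfolding slo_def by (rule conjI[OF _ conjI])
qed

lemma DD_bound: assumes "p \<in> DD" shows "\<exists>B. \<forall>n\<ge>B. p n = even n"
proof -
  have "finite {n. p n \<noteq> even n}" using assms unfolding DD_def by simp
  then obtain B where B: "\<forall>n\<in>{n. p n \<noteq> even n}. n < B" unfolding finite_nat_set_iff_bounded by blast
  have "\<forall>n\<ge>B. p n = even n"
  proof (intro allI impI)
    fix n assume "B \<le> n"
    then have "n \<notin> {n. p n \<noteq> even n}" using B by (meson not_less)
    then show "p n = even n" by simp
  qed
  then show ?thesis by blast
qed

lemma DD_true_after: assumes "p \<in> DD" shows "\<exists>m\<ge>N. p m"
proof -
  obtain B where B: "\<forall>n\<ge>B. p n = even n" using DD_bound[OF assms] by blast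
  have "p (2*(N+B)) = even (2*(N+B))" using B by simp
  then have "p (2*(N+B))" by simp
  then show ?thesis by (intro exI[of _ "2*(N+B)"]) simp
qed

lemma DD_false_after: assumes "p \<in> DD" shows "\<exists>m\<ge>N. \<not> p m"
proof -
  obtain B where B: "\<forall>n\<ge>B. p n = even n" using DD_bound[OF assms] by blast
  have "p (Suc (2*(N+B))) = even (Suc (2*(N+B)))" using B by simp
  then have "\<not> p (Suc (2*(N+B)))" by simp
  then show ?thesis by (intro exI[of _ "Suc (2*(N+B))"]) simp
qed

lemma DD_upd: assumes "p \<in> DD" shows "p(m := v) \<in> DD"
proof -
  have "{n. (p(m := v)) n \<noteq> even n} \<subseteq> insert m {n. p n \<noteq> even n}" by auto
  moreover have "finite (insert m {n. p n \<noteq> even n})" using assms unfolding DD_def by simp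
  ultimately show ?thesis unfolding DD_def using finite_subset by blast
qed

lemma DD_lower: assumes "p \<in> DD" shows "\<exists>q\<in>DD. lexl q p \<and> (\<forall>i<N. q i = p i)"
proof -
  obtain m where m: "m \<ge> N" "p m" using DD_true_after[OF assms] by blast
  have "lexl (p(m := False)) p" unfolding lexl_def using m(2) by (intro exI[of _ m]) simp
  moreover have "\<forall>i<N. (p(m := False)) i = p i" using m(1) by simp
  ultimately show ?thesis using DD_upd[OF assms] by blast
qed

lemma DD_upper: assumes "p \<in> DD" shows "\<exists>q\<in>DD. lexl p q \<and> (\<forall>i<N. q i = p i)"
proof -
  obtain m where m: "m \<ge> N" "\<not> p m" using DD_false_after[OF assms] by blast
  have "lexl p (p(m := True))" unfolding lexl_def using m(2) by (intro exI[of _ m]) simp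
  moreover have "\<forall>i<N. (p(m := True)) i = p i" using m(1) by simp
  ultimately show ?thesis using DD_upd[OF assms] by blast
qed

lemma DD_dns: "dns DD lexl"
  unfolding dns_def
proof (intro ballI impI)
  fix p q assume p: "p \<in> DD" and q: "q \<in> DD" and pq: "lexl p q"
  obtain n where n: "\<forall>i<n. p i = q i" "\<not> p n" "q n" using pq unfolding lexl_def by blast
  obtain m where m: "m \<ge> Suc n" "\<not> p m" using DD_false_after[OF p] by blast
  define r where "r = p(m := True)"
  have "r \<in> DD" unfolding r_def using DD_upd[OF p] .
  moreover have "lexl p r" unfolding lexl_def r_def using m(2) by (intro exI[of _ m]) simp
  moreover have "lexl r q" unfolding lexl_def r_def using n m(1) by (intro exI[of _ n]) simp
  ultimately show "\<exists>z\<in>DD. lexl p z \<and> lexl z q" by blast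
qed

lemma DD_noend: "noend DD lexl"
  unfolding noend_def using DD_lower DD_upper by blast

lemma DD_countable: "countable DD"
proof -
  have inj: "inj_on (\<lambda>p. {n. p n \<noteq> even n}) DD"
  proof (rule inj_onI)
    fix p q assume eq: "{n. p n \<noteq> even n} = {n. q n \<noteq> even n}"
    show "p = q"
    proof
      fix n
      have "n \<in> {n. p n \<noteq> even n} \<longleftrightarrow> n \<in> {n. q n \<noteq> even n}" using eq by simp
      then show "p n = q n" by auto
    qed
  qed
  have "(\<lambda>p. {n. p n \<noteq> even n}) ` DD \<subseteq> Collect finite" unfolding DD_def by auto
  then have "countable ((\<lambda>p. {n. p n \<noteq> even n}) ` DD)"
    using countable_subset countable_Collect_finite by blast
  then show ?thesis using inj countable_image_inj_on by blast
qed

lemma DD_ne: "DD \<noteq> {}"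
proof -
  have "even \<in> DD" unfolding DD_def by simp
  then show ?thesis by blast
qed

lemma slo_rat: "slo (\<rat> :: real set) (<)"
proof -
  have 1: "\<forall>x\<in>(\<rat>::real set). \<not> x < x" by simp
  have 2: "\<forall>x\<in>(\<rat>::real set). \<forall>y\<in>\<rat>. \<forall>z\<in>\<rat>. x < y \<longrightarrow> y < z \<longrightarrow> x < z"
    by (intro ballI impI) (rule less_trans)
  have 3: "\<forall>x\<in>(\<rat>::real set). \<forall>y\<in>\<rat>. x \<noteq> y \<longrightarrow> x < y \<or> y < x"
    by (intro ballI impI) (simp add: neq_iff)
  from 1 2 3 show ?thesis unfolding slo_def by (rule conjI[OF _ conjI])
qed

lemma dns_rat: "dns (\<rat> :: real set) (<)"
  unfolding dns_def using Rats_dense_in_real by blast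

lemma noend_rat: "noend (\<rat> :: real set) (<)"
  unfolding noend_def
proof
  fix x :: real assume "x \<in> \<rat>"
  then have "x - 1 \<in> \<rat>" "x + 1 \<in> \<rat>" by (simp_all add: Rats_diff Rats_add)
  moreover have "x - 1 < x" "x < x + 1" by simp_all
  ultimately show "(\<exists>y\<in>\<rat>. y < x) \<and> (\<exists>y\<in>\<rat>. x < y)" by blast
qed

lemma rat_iso:
  "\<exists>f. bij_betw f (\<rat> :: real set) DD \<and> (\<forall>x\<in>\<rat>. \<forall>y\<in>\<rat>. x < y \<longrightarrow> lexl (f x) (f y))"
proof -
  have "(\<rat> :: real set) \<noteq> {}" using Rats_0 by blast
  then show ?thesis
    using back_and_forth[OF slo_rat slo_lex dns_rat DD_dns noend_rat DD_noend countable_rat DD_countable _ DD_ne]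
    by blast
qed

lemma lex_convex:
  assumes "lexl d1 x" "lexl x d2" "\<forall>i<N. d1 i = d2 i"
  shows "\<forall>i<N. x i = d1 i"
proof -
  obtain n1 where n1: "\<forall>i<n1. d1 i = x i" "\<not> d1 n1" "x n1" using assms(1) unfolding lexl_def by blast
  obtain n2 where n2: "\<forall>i<n2. x i = d2 i" "\<not> x n2" "d2 n2" using assms(2) unfolding lexl_def by blast
  have "N \<le> n1"
  proof (rule ccontr)
    assume "\<not> N \<le> n1"
    then have lt: "n1 < N" by simp
    have "n1 \<noteq> n2" using n1(3) n2(2) by auto
    then show False
    proof (cases "n1 < n2")
      case True
      then have "x n1 = d2 n1" using n2(1) by simp
      moreover have "d1 n1 = d2 n1" using assms(3) lt by simp
      ultimately show False using n1(2,3) by simp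
    next
      case False
      then have lt2: "n2 < n1" using \<open>n1 \<noteq> n2\<close> by simp
      then have "d1 n2 = x n2" using n1(1) by simp
      moreover have "d1 n2 = d2 n2" using assms(3) lt lt2 by simp
      ultimately show False using n2(2,3) by simp
    qed
  qed
  then show ?thesis using n1(1) by simp
qed

lemma lex_prefix_left:
  assumes "lexl a d" shows "\<exists>N. \<forall>x. (\<forall>i<N. x i = d i) \<longrightarrow> lexl a x"
proof -
  obtain n where n: "\<forall>i<n. a i = d i" "\<not> a n" "d n" using assms unfolding lexl_def by blast
  have "\<forall>x. (\<forall>i<Suc n. x i = d i) \<longrightarrow> lexl a x"
  proof (intro allI impI)
    fix x assume x: "\<forall>i<Suc n. x i = d i"
    then have "\<forall>i<n. a i = x i" "x n" using n by auto
    then show "lexl a x" unfolding lexl_def using n(2) by blast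
  qed
  then show ?thesis by blast
qed

lemma lex_prefix_right:
  assumes "lexl d b" shows "\<exists>N. \<forall>x. (\<forall>i<N. x i = d i) \<longrightarrow> lexl x b"
proof -
  obtain n where n: "\<forall>i<n. d i = b i" "\<not> d n" "b n" using assms unfolding lexl_def by blast
  have "\<forall>x. (\<forall>i<Suc n. x i = d i) \<longrightarrow> lexl x b"
  proof (intro allI impI)
    fix x assume x: "\<forall>i<Suc n. x i = d i"
    then have "\<forall>i<n. x i = b i" "\<not> x n" using n by auto
    then show "lexl x b" unfolding lexl_def using n(3) by blast
  qed
  then show ?thesis by blast
qed


section \<open>Topology\<close>

lemma top_cantor: "topspace cantor_space = UNIV"
  by (simp add: cantor_space_def)

lemma proj_cont: "continuous_map cantor_space (discrete_topology UNIV) (\<lambda>x. x k)"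
  unfolding cantor_space_def by (rule continuous_map_product_projection) simp

lemma cantor_cont_iff:
  "continuous_map X cantor_space h \<longleftrightarrow> (\<forall>k. continuous_map X (discrete_topology UNIV) (\<lambda>x. h x k))"
  unfolding cantor_space_def by (rule continuous_map_componentwise_UNIV)

lemma cont_discrete:
  assumes "\<And>b. openin X {x \<in> topspace X. h x = b}"
  shows "continuous_map X (discrete_topology (UNIV::bool set)) h"
  unfolding continuous_map_def
proof (intro conjI allI impI)
  show "h \<in> topspace X \<rightarrow> topspace (discrete_topology UNIV)" by simp
  fix U :: "bool set"
  have eq: "{x \<in> topspace X. h x \<in> U} = \<Union> ((\<lambda>b. {x \<in> topspace X. h x = b}) ` U)" by auto
  have "openin X (\<Union> ((\<lambda>b. {x \<in> topspace X. h x = b}) ` U))"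
    by (rule openin_Union) (use assms in auto)
  then show "openin X {x \<in> topspace X. h x \<in> U}" using eq by simp
qed

lemma cyl_open: "openin cantor_space {x. \<forall>i<N. x i = d i}"
proof (induction N)
  case 0
  have "openin cantor_space (topspace cantor_space)" by (rule openin_topspace)
  then show ?case by (simp add: top_cantor)
next
  case (Suc N)
  have eq: "{x. \<forall>i<Suc N. x i = d i} = {x. \<forall>i<N. x i = d i} \<inter> {x \<in> topspace cantor_space. x N \<in> {d N}}"
    by (auto simp: top_cantor less_Suc_eq)
  have "openin cantor_space {x \<in> topspace cantor_space. x N \<in> {d N}}"
    by (rule openin_continuous_map_preimage[OF proj_cont]) simp
  then show ?case unfolding eq using Suc.IH by (intro openin_Int)
qed

locale ratiso =
  fixes f :: "real \<Rightarrow> nat \<Rightarrow> bool"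
  assumes fb: "bij_betw f \<rat> DD"
    and fm: "\<And>x y. x \<in> \<rat> \<Longrightarrow> y \<in> \<rat> \<Longrightarrow> x < y \<Longrightarrow> lexl (f x) (f y)"
begin

definition g where "g = inv_into \<rat> f"

lemma fD: "q \<in> \<rat> \<Longrightarrow> f q \<in> DD"
  using fb bij_betwE by blast

lemma gQ: "d \<in> DD \<Longrightarrow> g d \<in> \<rat>"
  using bij_betw_inv_into[OF fb] bij_betwE unfolding g_def by blast

lemma fg: "d \<in> DD \<Longrightarrow> f (g d) = d"
  unfolding g_def using bij_betw_imp_surj_on[OF fb] by (metis f_inv_into_f)

lemma gf: "q \<in> \<rat> \<Longrightarrow> g (f q) = q"
  unfolding g_def using bij_betw_imp_inj_on[OF fb] by (rule inv_into_f_f)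

lemma refl_ord:
  assumes "x \<in> \<rat>" "y \<in> \<rat>" "lexl (f x) (f y)" shows "x < y"
proof (rule ccontr)
  assume "\<not> x < y"
  then have "y < x \<or> y = x" by auto
  then show False
  proof
    assume "y < x"
    then have "lexl (f y) (f x)" using fm assms(1,2) by blast
    then have "lexl (f x) (f x)" using lexl_trans assms(3) by blast
    then show False using lexl_irr by blast
  next
    assume "y = x"
    then show False using assms(3) lexl_irr by simp
  qed
qed

lemma contf: "continuous_map (subtopology euclideanreal \<rat>) (discrete_topology UNIV) (\<lambda>q. f q k)"
proof (rule cont_discrete)
  fix b
  have "openin (top_of_set \<rat>) {q \<in> \<rat>. f q k = b}"
    unfolding openin_euclidean_subtopology_iff
  proof (intro conjI ballI)
    show "{q \<in> \<rat>. f q k = b} \<subseteq> \<rat>" by blast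
    fix q assume "q \<in> {q \<in> \<rat>. f q k = b}"
    then have qQ: "q \<in> \<rat>" and qb: "f q k = b" by auto
    obtain d1 where d1: "d1 \<in> DD" "lexl d1 (f q)" "\<forall>i<Suc k. d1 i = f q i"
      using DD_lower[OF fD[OF qQ]] by blast
    obtain d2 where d2: "d2 \<in> DD" "lexl (f q) d2" "\<forall>i<Suc k. d2 i = f q i"
      using DD_upper[OF fD[OF qQ]] by blast
    define q1 where "q1 = g d1"
    define q2 where "q2 = g d2"
    have q1Q: "q1 \<in> \<rat>" and q2Q: "q2 \<in> \<rat>" unfolding q1_def q2_def using gQ d1(1) d2(1) by auto
    have fq1: "f q1 = d1" and fq2: "f q2 = d2" unfolding q1_def q2_def using fg d1(1) d2(1) by auto
    have "q1 < q" using refl_ord[OF q1Q qQ] d1(2) fq1 by simp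
    moreover have "q < q2" using refl_ord[OF qQ q2Q] d2(2) fq2 by simp
    ultimately have epos: "min (q - q1) (q2 - q) > 0" by simp
    have "\<forall>x'\<in>\<rat>. dist x' q < min (q - q1) (q2 - q) \<longrightarrow> x' \<in> {q \<in> \<rat>. f q k = b}"
    proof (intro ballI impI)
      fix x' assume x'Q: "x' \<in> \<rat>" and dx: "dist x' q < min (q - q1) (q2 - q)"
      then have "q1 < x'" "x' < q2" by (auto simp: dist_real_def abs_less_iff)
      then have "lexl d1 (f x')" "lexl (f x') d2"
        using fm[OF q1Q x'Q] fm[OF x'Q q2Q] fq1 fq2 by auto
      moreover have "\<forall>i<Suc k. d1 i = d2 i" using d1(3) d2(3) by simp
      ultimately have "\<forall>i<Suc k. f x' i = d1 i" by (rule lex_convex)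
      then have "f x' k = f q k" using d1(3) by simp
      then show "x' \<in> {q \<in> \<rat>. f q k = b}" using x'Q qb by simp
    qed
    then show "\<exists>e>0. \<forall>x'\<in>\<rat>. dist x' q < e \<longrightarrow> x' \<in> {q \<in> \<rat>. f q k = b}"
      using epos by blast
  qed
  then show "openin (subtopology euclideanreal \<rat>) {x \<in> topspace (subtopology euclideanreal \<rat>). f x k = b}"
    by simp
qed

lemma contf_full: "continuous_map (subtopology euclideanreal \<rat>) cantor_space f"
  unfolding cantor_cont_iff using contf by blast

lemma contg: "continuous_map (subtopology cantor_space DD) (subtopology euclideanreal \<rat>) g"
proof (rule continuous_map_into_subtopology)
  show "g \<in> topspace (subtopology cantor_space DD) \<rightarrow> \<rat>" unfolding topspace_subtopology top_cantor
    using gQ by blast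
  show "continuous_map (subtopology cantor_space DD) euclideanreal g"
    unfolding continuous_map_def
  proof (intro conjI allI impI)
    show "g \<in> topspace (subtopology cantor_space DD) \<rightarrow> topspace euclideanreal" by simp
    fix U :: "real set" assume "openin euclideanreal U"
    then have oU: "open U" by (rule open_openin[THEN iffD2])
    have "openin (subtopology cantor_space DD) {x \<in> DD. g x \<in> U}"
    proof (subst openin_subopen, intro ballI)
      fix d assume "d \<in> {x \<in> DD. g x \<in> U}"
      then have dD: "d \<in> DD" and gdU: "g d \<in> U" by auto
      obtain e where e: "e > 0" "ball (g d) e \<subseteq> U" using open_contains_ball[THEN iffD1, OF oU] gdU by blast
      have gdQ: "g d \<in> \<rat>" using gQ dD by simp
      obtain q1 where q1: "q1 \<in> \<rat>" "g d - e < q1" "q1 < g d"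
        using Rats_dense_in_real[of "g d - e" "g d"] e(1) by auto
      obtain q2 where q2: "q2 \<in> \<rat>" "g d < q2" "q2 < g d + e"
        using Rats_dense_in_real[of "g d" "g d + e"] e(1) by auto
      have "lexl (f q1) d" using fm[OF q1(1) gdQ q1(3)] fg[OF dD] by simp
      then obtain N1 where N1: "\<forall>x. (\<forall>i<N1. x i = d i) \<longrightarrow> lexl (f q1) x"
        using lex_prefix_left by blast
      have "lexl d (f q2)" using fm[OF gdQ q2(1) q2(2)] fg[OF dD] by simp
      then obtain N2 where N2: "\<forall>x. (\<forall>i<N2. x i = d i) \<longrightarrow> lexl x (f q2)"
        using lex_prefix_right by blast
      define T where "T = DD \<inter> {x. \<forall>i<max N1 N2. x i = d i}"
      have "openin (subtopology cantor_space DD) T"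
        unfolding T_def by (rule openin_subtopology_Int2[OF cyl_open])
      moreover have "d \<in> T" unfolding T_def using dD by simp
      moreover have "T \<subseteq> {x \<in> DD. g x \<in> U}"
      proof
        fix x assume "x \<in> T"
        then have xD: "x \<in> DD" and xc: "\<forall>i<max N1 N2. x i = d i" unfolding T_def by auto
        have "lexl (f q1) x" using N1 xc by simp
        moreover have "lexl x (f q2)" using N2 xc by simp
        moreover have fx: "f (g x) = x" using fg xD by simp
        ultimately have "lexl (f q1) (f (g x))" "lexl (f (g x)) (f q2)" by simp_all
        then have "q1 < g x" "g x < q2" using refl_ord[OF q1(1) gQ[OF xD]] refl_ord[OF gQ[OF xD] q2(1)] by auto
        then have "g x \<in> ball (g d) e" using q1 q2 by (auto simp: dist_real_def abs_less_iff)
        then show "x \<in> {x \<in> DD. g x \<in> U}" using e(2) xD by blast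
      qed
      ultimately show "\<exists>T. openin (subtopology cantor_space DD) T \<and> d \<in> T \<and> T \<subseteq> {x \<in> DD. g x \<in> U}"
        by blast
    qed
    then show "openin (subtopology cantor_space DD) {x \<in> topspace (subtopology cantor_space DD). g x \<in> U}"
      by (simp add: top_cantor)
  qed
qed

end


lemma char_fun_mem: "x \<in> char_fun ` A \<longleftrightarrow> Collect x \<in> A"
proof
  assume "x \<in> char_fun ` A"
  then obtain t where "t \<in> A" "x = char_fun t" by blast
  moreover have "Collect (char_fun t) = t" by (simp add: char_fun_def)
  ultimately show "Collect x \<in> A" by simp
next
  assume "Collect x \<in> A"
  moreover have "char_fun (Collect x) = x" by (simp add: char_fun_def)
  ultimately show "x \<in> char_fun ` A" by (metis imageI)
qed

definition TT :: "nat set set \<Rightarrow> nat set set" where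
  "TT S = {t. finite {n. 2*n \<notin> t} \<and> {n. Suc (2*n) \<in> t} \<in> S}"

lemma semifilter_TT:
  assumes "semifilter S" shows "semifilter (TT S)"
proof -
  note sf = assms[unfolded semifilter_def]
  have S1: "{} \<notin> S" using conjunct1[OF sf] .
  have S2: "UNIV \<in> S" using conjunct1[OF conjunct2[OF sf]] .
  have S3: "\<forall>x y. x \<in> S \<and> finite ((x - y) \<union> (y - x)) \<longrightarrow> y \<in> S"
    using conjunct1[OF conjunct2[OF conjunct2[OF sf]]] .
  have S4: "\<forall>x y. x \<in> S \<and> x \<subseteq> y \<longrightarrow> y \<in> S"
    using conjunct2[OF conjunct2[OF conjunct2[OF sf]]] .
  have inj2: "inj (\<lambda>n::nat. 2*n)" by (simp add: inj_on_def)
  have inj2s: "inj (\<lambda>n::nat. Suc (2*n))" by (simp add: inj_on_def)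
  have T1: "{} \<notin> TT S" unfolding TT_def using S1 by simp
  have T2: "UNIV \<in> TT S" unfolding TT_def using S2 by simp
  have T3: "\<forall>x y. x \<in> TT S \<and> finite ((x - y) \<union> (y - x)) \<longrightarrow> y \<in> TT S"
  proof (intro allI impI, elim conjE)
    fix x y assume xT: "x \<in> TT S" and fd: "finite ((x - y) \<union> (y - x))"
    define D where "D = (x - y) \<union> (y - x)"
    have fD: "finite D" using fd unfolding D_def .
    have a: "{n. 2*n \<notin> y} \<subseteq> {n. 2*n \<notin> x} \<union> (\<lambda>n. 2*n) -` D" unfolding D_def by auto
    have "finite ((\<lambda>n::nat. 2*n) -` D)" using finite_vimageI[OF fD inj2] .
    moreover have "finite {n. 2*n \<notin> x}" using xT unfolding TT_def by simp
    ultimately have f1: "finite {n. 2*n \<notin> y}" using a finite_subset by blast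
    define x' where "x' = {n. Suc (2*n) \<in> x}"
    define y' where "y' = {n. Suc (2*n) \<in> y}"
    have b: "(x' - y') \<union> (y' - x') \<subseteq> (\<lambda>n. Suc (2*n)) -` D" unfolding D_def x'_def y'_def by auto
    have "finite ((\<lambda>n::nat. Suc (2*n)) -` D)" using finite_vimageI[OF fD inj2s] .
    then have "finite ((x' - y') \<union> (y' - x'))" using b finite_subset by blast
    moreover have "x' \<in> S" using xT unfolding TT_def x'_def by simp
    ultimately have "y' \<in> S" using S3 by blast
    then show "y \<in> TT S" using f1 unfolding TT_def y'_def by simp
  qed
  have T4: "\<forall>x y. x \<in> TT S \<and> x \<subseteq> y \<longrightarrow> y \<in> TT S"
  proof (intro allI impI, elim conjE)
    fix x y assume xT: "x \<in> TT S" and xy: "x \<subseteq> y"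
    have "{n. 2*n \<notin> y} \<subseteq> {n. 2*n \<notin> x}" using xy by auto
    moreover have "finite {n. 2*n \<notin> x}" using xT unfolding TT_def by simp
    ultimately have f1: "finite {n. 2*n \<notin> y}" using finite_subset by blast
    have "{n. Suc (2*n) \<in> x} \<subseteq> {n. Suc (2*n) \<in> y}" using xy by auto
    moreover have "{n. Suc (2*n) \<in> x} \<in> S" using xT unfolding TT_def by simp
    ultimately have "{n. Suc (2*n) \<in> y} \<in> S" using S4 by blast
    then show "y \<in> TT S" using f1 unfolding TT_def by simp
  qed
  show ?thesis unfolding semifilter_def using T1 T2 T3 T4 by (intro conjI)
qed

context ratiso
begin

definition HH :: "real \<times> (nat \<Rightarrow> bool) \<Rightarrow> nat \<Rightarrow> bool" where
  "HH z = (\<lambda>i. if even i then (f (fst z) (i div 2) = even (i div 2)) else snd z (i div 2))"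

definition EE :: "(nat \<Rightarrow> bool) \<Rightarrow> nat \<Rightarrow> bool" where
  "EE x = (\<lambda>n. x (2*n) = even n)"

definition ODP :: "(nat \<Rightarrow> bool) \<Rightarrow> nat \<Rightarrow> bool" where
  "ODP x = (\<lambda>n. x (Suc (2*n)))"

definition GG :: "(nat \<Rightarrow> bool) \<Rightarrow> real \<times> (nat \<Rightarrow> bool)" where
  "GG x = (g (EE x), ODP x)"

lemma homeo:
  assumes "semifilter S"
  shows "homeomorphic_maps
     (prod_topology (subtopology euclideanreal \<rat>) (subtopology cantor_space (char_fun ` S)))
     (subtopology cantor_space (char_fun ` TT S)) HH GG"
proof -
  let ?X = "prod_topology (subtopology euclideanreal \<rat>) (subtopology cantor_space (char_fun ` S))"
  let ?Y = "subtopology cantor_space (char_fun ` TT S)"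
  have topX: "topspace ?X = \<rat> \<times> char_fun ` S" by (simp add: top_cantor)
  have topY: "topspace ?Y = char_fun ` TT S" by (simp add: top_cantor)
  have Hcomp: "continuous_map ?X (discrete_topology UNIV) (\<lambda>z. HH z k)" for k
  proof (cases "even k")
    case True
    have c1: "continuous_map ?X (discrete_topology UNIV) ((\<lambda>q. f q (k div 2)) \<circ> fst)"
      by (rule continuous_map_compose[OF continuous_map_fst contf])
    have c2: "continuous_map (discrete_topology UNIV) (discrete_topology UNIV) (\<lambda>b::bool. b = even (k div 2))"
      by simp
    have c3: "continuous_map ?X (discrete_topology UNIV) ((\<lambda>b::bool. b = even (k div 2)) \<circ> ((\<lambda>q. f q (k div 2)) \<circ> fst))"
      by (rule continuous_map_compose[OF c1 c2])
    have eq: "(\<lambda>z. HH z k) = ((\<lambda>b::bool. b = even (k div 2)) \<circ> ((\<lambda>q. f q (k div 2)) \<circ> fst))"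
      by (simp add: HH_def fun_eq_iff True)
    show ?thesis unfolding eq by (rule c3)
  next
    case False
    have c1: "continuous_map ?X (discrete_topology UNIV) ((\<lambda>x. x (k div 2)) \<circ> snd)"
      by (rule continuous_map_compose[OF continuous_map_snd continuous_map_from_subtopology[OF proj_cont]])
    have eq: "(\<lambda>z. HH z k) = ((\<lambda>x. x (k div 2)) \<circ> snd)"
      by (simp add: HH_def fun_eq_iff False)
    show ?thesis unfolding eq by (rule c1)
  qed
  have Himg: "HH z \<in> char_fun ` TT S" if zX: "z \<in> topspace ?X" for z
  proof -
    obtain q p where z: "z = (q,p)" "q \<in> \<rat>" "p \<in> char_fun ` S" using zX topX by auto
    have e1: "{n. 2*n \<notin> Collect (HH z)} = {n. f q n \<noteq> even n}" by (auto simp: HH_def z)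
    have "f q \<in> DD" using fD z(2) .
    then have f1: "finite {n. 2*n \<notin> Collect (HH z)}" unfolding e1 DD_def by simp
    have e2: "{n. Suc (2*n) \<in> Collect (HH z)} = Collect p" by (auto simp: HH_def z)
    have "Collect p \<in> S" using z(3) char_fun_mem by blast
    then have "Collect (HH z) \<in> TT S" unfolding TT_def using f1 e2 by simp
    then show ?thesis using char_fun_mem by blast
  qed
  have contH: "continuous_map ?X ?Y HH"
  proof (rule continuous_map_into_subtopology)
    show "continuous_map ?X cantor_space HH" unfolding cantor_cont_iff using Hcomp by blast
    show "HH \<in> topspace ?X \<rightarrow> char_fun ` TT S" using Himg by blast
  qed
  have Eimg: "EE x \<in> DD" if "x \<in> char_fun ` TT S" for x
  proof -
    have "Collect x \<in> TT S" using that char_fun_mem by blast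
    then have "finite {n. 2*n \<notin> Collect x}" unfolding TT_def by simp
    moreover have "{n. EE x n \<noteq> even n} = {n. 2*n \<notin> Collect x}" by (auto simp: EE_def)
    ultimately show ?thesis unfolding DD_def by simp
  qed
  have Oimg: "ODP x \<in> char_fun ` S" if "x \<in> char_fun ` TT S" for x
  proof -
    have "Collect x \<in> TT S" using that char_fun_mem by blast
    then have "{n. Suc (2*n) \<in> Collect x} \<in> S" unfolding TT_def by simp
    moreover have "Collect (ODP x) = {n. Suc (2*n) \<in> Collect x}" by (simp add: ODP_def)
    ultimately show ?thesis using char_fun_mem by metis
  qed
  have contE: "continuous_map ?Y (subtopology cantor_space DD) EE"
  proof (rule continuous_map_into_subtopology)
    show "continuous_map ?Y cantor_space EE"
      unfolding cantor_cont_iff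
    proof
      fix n
      have c1: "continuous_map ?Y (discrete_topology UNIV) (\<lambda>x. x (2*n))"
        by (rule continuous_map_from_subtopology[OF proj_cont])
      have c2: "continuous_map (discrete_topology UNIV) (discrete_topology UNIV) (\<lambda>b::bool. b = even n)"
        by simp
      have "continuous_map ?Y (discrete_topology UNIV) ((\<lambda>b::bool. b = even n) \<circ> (\<lambda>x. x (2*n)))"
        by (rule continuous_map_compose[OF c1 c2])
      moreover have "(\<lambda>x. EE x n) = ((\<lambda>b::bool. b = even n) \<circ> (\<lambda>x. x (2*n)))"
        by (simp add: EE_def fun_eq_iff)
      ultimately show "continuous_map ?Y (discrete_topology UNIV) (\<lambda>x. EE x n)" by simp
    qed
    show "EE \<in> topspace ?Y \<rightarrow> DD" using Eimg topY by blast
  qed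
  have contO: "continuous_map ?Y (subtopology cantor_space (char_fun ` S)) ODP"
  proof (rule continuous_map_into_subtopology)
    show "continuous_map ?Y cantor_space ODP"
      unfolding cantor_cont_iff
    proof
      fix n
      have "continuous_map ?Y (discrete_topology UNIV) (\<lambda>x. x (Suc (2*n)))"
        by (rule continuous_map_from_subtopology[OF proj_cont])
      then show "continuous_map ?Y (discrete_topology UNIV) (\<lambda>x. ODP x n)"
        by (simp add: ODP_def)
    qed
    show "ODP \<in> topspace ?Y \<rightarrow> char_fun ` S" using Oimg topY by blast
  qed
  have contG: "continuous_map ?Y ?X GG"
    unfolding continuous_map_pairwise
  proof
    have "fst \<circ> GG = g \<circ> EE" by (simp add: GG_def fun_eq_iff)
    moreover have "continuous_map ?Y (subtopology euclideanreal \<rat>) (g \<circ> EE)"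
      by (rule continuous_map_compose[OF contE contg])
    ultimately show "continuous_map ?Y (subtopology euclideanreal \<rat>) (fst \<circ> GG)" by simp
    have "snd \<circ> GG = ODP" by (simp add: GG_def fun_eq_iff)
    then show "continuous_map ?Y (subtopology cantor_space (char_fun ` S)) (snd \<circ> GG)"
      using contO by simp
  qed
  have GH: "GG (HH z) = z" if zX: "z \<in> topspace ?X" for z
  proof -
    obtain q p where z: "z = (q,p)" "q \<in> \<rat>" using zX topX by auto
    have "EE (HH z) = f q" by (auto simp: EE_def HH_def z fun_eq_iff)
    moreover have "ODP (HH z) = p" by (simp add: ODP_def HH_def z fun_eq_iff)
    ultimately show ?thesis using gf[OF z(2)] by (simp add: GG_def z)
  qed
  have HG: "HH (GG y) = y" if "y \<in> topspace ?Y" for y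
  proof -
    have yT: "y \<in> char_fun ` TT S" using that topY by simp
    have fe: "f (g (EE y)) = EE y" using fg[OF Eimg[OF yT]] .
    show ?thesis
    proof
      fix k
      show "HH (GG y) k = y k"
      proof (cases "even k")
        case True
        then have k: "2 * (k div 2) = k" by simp
        have "HH (GG y) k = (EE y (k div 2) = even (k div 2))"
          by (simp add: HH_def GG_def fe True)
        also have "\<dots> = y k" by (auto simp: EE_def k)
        finally show ?thesis .
      next
        case False
        then have k: "Suc (2 * (k div 2)) = k" by presburger
        have "HH (GG y) k = ODP y (k div 2)"
          by (simp add: HH_def GG_def False)
        also have "\<dots> = y k" by (simp add: ODP_def k)
        finally show ?thesis .
      qed
    qed
  qed
  show ?thesis unfolding homeomorphic_maps_def using contH contG GH HG by blast
qed

end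

theorem lemma8p2:
  fixes S :: "nat set set"
  assumes "semifilter S"
  shows "\<exists>T :: nat set set. semifilter T \<and>
           (prod_topology (subtopology euclideanreal \<rat>)
                          (subtopology cantor_space (char_fun ` S)))
             homeomorphic_space (subtopology cantor_space (char_fun ` T))"
proof -
  obtain f :: "real \<Rightarrow> nat \<Rightarrow> bool" where fbm: "bij_betw f \<rat> DD \<and> (\<forall>x\<in>\<rat>. \<forall>y\<in>\<rat>. x < y \<longrightarrow> lexl (f x) (f y))"
    using rat_iso by (rule exE)
  have fb: "bij_betw f \<rat> DD" using conjunct1[OF fbm] .
  have fm: "\<forall>x\<in>\<rat>. \<forall>y\<in>\<rat>. x < y \<longrightarrow> lexl (f x) (f y)" using conjunct2[OF fbm] .
  interpret ratiso f
    by unfold_locales (use fb fm in blast)+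
  have "homeomorphic_maps
     (prod_topology (subtopology euclideanreal \<rat>) (subtopology cantor_space (char_fun ` S)))
     (subtopology cantor_space (char_fun ` TT S)) HH GG"
    using homeo[OF assms] .
  then have "(prod_topology (subtopology euclideanreal \<rat>) (subtopology cantor_space (char_fun ` S)))
             homeomorphic_space (subtopology cantor_space (char_fun ` TT S))"
    by (rule homeomorphic_maps_imp_homeomorphic_space)
  then show ?thesis using semifilter_TT[OF assms] by blast
qed

end
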